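(* For all positive integers $k$, $n$ and $s$, $$\sum_{q\mid k}\bigl|c_q^{(s)}(n)\bigr|\le n\,2^{\omega(k)}.$$
   Context: For positive integers $a,b,s$, the generalized gcd $(a,b)_s$ is the largest $d^s$ ($d\in\mathbb{N}$) such that $d^s\mid a$ and $d^s\mid b$. The Cohen–Ramanujan sum is defined for positive integers $q,n,s$ by $$c_q^{(s)}(n)=\sum_{\substack{h=1\\ (h,q^s)_s=1}}^{q^s} e^{2\pi i n h/q^s}.$$ $\omega(k)$ denotes the number of distinct prime divisors of $k$; the sum is over the positive divisors $q$ of $k$. *)

theory Defs
  imports "HOL-Analysis.Analysis" "HOL-Computational_Algebra.Primes"
begin

definition gen_gcd :: "nat \<Rightarrow> nat \<Rightarrow> nat \<Rightarrow> nat" where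
  "gen_gcd s a b = Max {d ^ s | d. d \<ge> 1 \<and> d ^ s dvd a \<and> d ^ s dvd b}"

definition cohen_ramanujan :: "nat \<Rightarrow> nat \<Rightarrow> nat \<Rightarrow> complex" where
  "cohen_ramanujan s q n =
     (\<Sum>h \<in> {h \<in> {1..q ^ s}. gen_gcd s h (q ^ s) = 1}.
        exp (2 * of_real pi * \<i> * of_nat n * of_nat h / of_nat (q ^ s)))"

definition omega :: "nat \<Rightarrow> nat" where
  "omega k = card (prime_factors k)"

end

theory Submission
  imports Defs
begin

definition Phi :: "nat \<Rightarrow> nat \<Rightarrow> complex" where
  "Phi n L = (\<Sum>j\<in>{1..L}. exp (2 * of_real pi * \<i> * of_nat n * of_nat j / of_nat L))"

lemma Phi_eq:
  assumes "L > 0"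
  shows "Phi n L = (if L dvd n then of_nat L else 0)"
proof -
  define w where "w = exp (2 * of_real pi * \<i> * of_nat n / of_nat L)"
  have terms: "exp (2 * of_real pi * \<i> * of_nat n * of_nat j / of_nat L) = w ^ j" for j
  proof -
    have "2 * of_real pi * \<i> * of_nat n * of_nat j / of_nat L = of_nat j * (2 * of_real pi * \<i> * of_nat n / of_nat L)"
      by simp
    then show ?thesis unfolding w_def by (simp only: exp_of_nat_mult)
  qed
  have Phi: "Phi n L = (\<Sum>j\<in>{1..L}. w ^ j)"
    unfolding Phi_def by (simp add: terms)
  have wL: "w ^ L = 1"
  proof -
    have "w ^ L = exp (of_nat L * (2 * of_real pi * \<i> * of_nat n / of_nat L))"
      unfolding w_def by (simp only: exp_of_nat_mult)
    also have "of_nat L * (2 * of_real pi * \<i> * of_nat n / of_nat L) = of_nat n * (2 * of_real pi * \<i>)"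
      using assms by (simp add: field_simps)
    also have "exp \<dots> = exp (2 * of_real pi * \<i>) ^ n" by (simp only: exp_of_nat_mult)
    finally show ?thesis by simp
  qed
  have w1: "w = 1 \<longleftrightarrow> L dvd n"
  proof
    assume "w = 1"
    then obtain m :: int where m: "2 * pi * real n / real L = of_int (2 * m) * pi"
      unfolding w_def exp_eq_1 by auto
    then have "real n = real L * of_int m" using assms by (simp add: field_simps)
    then have "int n = int L * m" by (metis of_int_eq_iff of_int_mult of_int_of_nat_eq)
    then have "int L dvd int n" by simp
    then show "L dvd n" by simp
  next
    assume "L dvd n"
    then obtain m where "n = L * m" by auto
    then have "2 * of_real pi * \<i> * of_nat n / of_nat L = of_nat m * (2 * of_real pi * \<i>)"
      using assms by (simp add: field_simps)
    then show "w = 1" unfolding w_def by (simp only: exp_of_nat_mult) simp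
  qed
  show ?thesis
  proof (cases "L dvd n")
    case True
    then show ?thesis using w1 Phi by simp
  next
    case False
    then have "w \<noteq> 1" using w1 by simp
    then have "(\<Sum>j\<in>{1..L}. w ^ j) = (w ^ 1 - w ^ Suc L) / (1 - w)"
      using assms by (subst sum_gp) auto
    also have "w ^ Suc L = w" using wL by simp
    finally show ?thesis using Phi False by simp
  qed
qed

lemma alt_sum:
  assumes "finite S"
  shows "(\<Sum>T\<in>Pow S. (-1::complex) ^ card T) = (if S = {} then 1 else 0)"
proof (cases "S = {}")
  case True then show ?thesis by simp
next
  case False
  have "card {T. T \<subseteq> S \<and> {} \<subseteq> T \<and> even (card T)} = card {T. T \<subseteq> S \<and> {} \<subseteq> T \<and> odd (card T)}"
    using assms False by (intro card_subsupersets_even_odd) auto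
  then have "(\<Sum>T\<in>Pow S. (-1::complex) ^ card T) = 0"
    using assms by (intro sum_alternating_cancels) (auto simp: Pow_def)
  then show ?thesis using False by simp
qed

lemma prime_pow_prod_dvd:
  fixes h :: nat
  assumes "finite T" "\<forall>p\<in>T. prime p"
  shows "(\<forall>p\<in>T. p ^ s dvd h) \<longleftrightarrow> (\<Prod>p\<in>T. p ^ s) dvd h"
  using assms
proof (induction T rule: finite_induct)
  case empty then show ?case by simp
next
  case (insert x F)
  have cop: "coprime (x ^ s) (\<Prod>p\<in>F. p ^ s)"
    using insert by (intro prod_coprime_right coprime_power_left_iff[THEN iffD2] coprime_power_right_iff[THEN iffD2])
       (auto intro!: primes_coprime)
  show ?case
  proof
    assume "\<forall>p\<in>insert x F. p ^ s dvd h"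
    then show "(\<Prod>p\<in>insert x F. p ^ s) dvd h"
      using insert cop by (auto intro!: divides_mult)
  next
    assume a: "(\<Prod>p\<in>insert x F. p ^ s) dvd h"
    then have "x ^ s dvd h" "(\<Prod>p\<in>F. p ^ s) dvd h" using insert
      by (auto intro: dvd_mult_left dvd_mult_right)
    then show "\<forall>p\<in>insert x F. p ^ s dvd h" using insert by auto
  qed
qed

lemma gen_gcd_eq_1:
  assumes "s > 0" "h > 0" "q > 0"
  shows "gen_gcd s h (q ^ s) = 1 \<longleftrightarrow> (\<forall>p. prime p \<and> p dvd q \<longrightarrow> \<not> p ^ s dvd h)"
proof -
  define S where "S = {d ^ s | d. d \<ge> 1 \<and> d ^ s dvd h \<and> d ^ s dvd q ^ s}"
  have fin: "finite S"
    by (rule finite_subset[of _ "{..h}"]) (auto simp: S_def assms dvd_imp_le)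
  have one: "1 \<in> S" unfolding S_def by force
  have le: "x \<le> Max S" if "x \<in> S" for x using fin that by simp
  have inS: "Max S \<in> S" using fin one by (intro Max_in) auto
  have gg: "gen_gcd s h (q ^ s) = Max S" unfolding gen_gcd_def S_def by simp
  show ?thesis
  proof
    assume g1: "gen_gcd s h (q ^ s) = 1"
    show "\<forall>p. prime p \<and> p dvd q \<longrightarrow> \<not> p ^ s dvd h"
    proof (intro allI impI)
      fix p :: nat assume p: "prime p \<and> p dvd q"
      show "\<not> p ^ s dvd h"
      proof
        assume "p ^ s dvd h"
        then have "p ^ s \<in> S" unfolding S_def using p prime_ge_1_nat
          by (auto intro!: exI[of _ p] dvd_power_same)
        then have "p ^ s \<le> 1" using le g1 gg by auto
        moreover have "p ^ s > 1" using p assms prime_gt_1_nat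
          by (metis one_less_power)
        ultimately show False by simp
      qed
    qed
  next
    assume H: "\<forall>p. prime p \<and> p dvd q \<longrightarrow> \<not> p ^ s dvd h"
    from inS obtain d where d: "Max S = d ^ s" "d \<ge> 1" "d ^ s dvd h" "d ^ s dvd q ^ s"
      unfolding S_def by auto
    have "d = 1"
    proof (rule ccontr)
      assume "d \<noteq> 1"
      then obtain p where p: "prime p" "p dvd d" using prime_factor_nat by blast
      have "d dvd q" using d assms by simp
      then have "p dvd q" using p dvd_trans by blast
      moreover have "p ^ s dvd h" using p d dvd_trans dvd_power_same by blast
      ultimately show False using H p by blast
    qed
    then show "gen_gcd s h (q ^ s) = 1" using gg d by simp
  qed
qed

lemma inner_sum:
  assumes "M > 0" "M dvd N" "N > 0"
  shows "(\<Sum>h\<in>{h\<in>{1..N}. M dvd h}. exp (2 * of_real pi * \<i> * of_nat n * of_nat h / of_nat N))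
         = Phi n (N div M)"
proof -
  define L where "L = N div M"
  have N: "N = M * L" using assms L_def by simp
  have L0: "L > 0" using N assms by (cases L) auto
  have set: "{h\<in>{1..N}. M dvd h} = (\<lambda>j. M * j) ` {1..L}"
  proof (safe)
    fix h assume h: "h \<in> {1..N}" "M dvd h"
    then obtain j where j: "h = M * j" by auto
    have "j \<ge> 1" using h j by (cases j) auto
    moreover have "j \<le> L" using h j N assms by auto
    ultimately show "h \<in> (\<lambda>j. M * j) ` {1..L}" using j by auto
  next
    fix j assume "j \<in> {1..L}"
    then show "M * j \<in> {1..N}" using N assms by auto
  qed auto
  have inj: "inj_on (\<lambda>j. M * j) {1..L}" using assms by (auto simp: inj_on_def)
  have "(\<Sum>h\<in>{h\<in>{1..N}. M dvd h}. exp (2 * of_real pi * \<i> * of_nat n * of_nat h / of_nat N))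
     = (\<Sum>j\<in>{1..L}. exp (2 * of_real pi * \<i> * of_nat n * of_nat (M * j) / of_nat N))"
    unfolding set by (subst sum.reindex[OF inj]) simp
  also have "\<dots> = (\<Sum>j\<in>{1..L}. exp (2 * of_real pi * \<i> * of_nat n * of_nat j / of_nat L))"
  proof (rule sum.cong[OF refl])
    fix j
    have "(2 * of_real pi * \<i> * of_nat n * of_nat (M * j) / of_nat N :: complex)
        = 2 * of_real pi * \<i> * of_nat n * of_nat j / of_nat L"
      using assms L0 unfolding N by (simp add: field_simps)
    then show "exp (2 * of_real pi * \<i> * of_nat n * of_nat (M * j) / of_nat N) =
      exp (2 * of_real pi * \<i> * of_nat n * of_nat j / of_nat L)" by simp
  qed
  finally show ?thesis unfolding Phi_def L_def .
qed

lemma indicator_sum: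
  fixes h :: nat
  assumes "finite P" "\<forall>p\<in>P. prime p"
  shows "(if {p\<in>P. p ^ s dvd h} = {} then 1 else 0)
       = (\<Sum>T\<in>Pow P. (-1::complex) ^ card T * (if (\<Prod>p\<in>T. p ^ s) dvd h then 1 else 0))"
proof -
  define S where "S = {p\<in>P. p ^ s dvd h}"
  have "(\<Sum>T\<in>Pow P. (-1::complex) ^ card T * (if (\<Prod>p\<in>T. p ^ s) dvd h then 1 else 0))
      = (\<Sum>T\<in>Pow P. if T \<subseteq> S then (-1::complex) ^ card T else 0)"
  proof (rule sum.cong[OF refl])
    fix T assume T: "T \<in> Pow P"
    then have "finite T" "\<forall>p\<in>T. prime p" using assms finite_subset by auto
    then have "(\<Prod>p\<in>T. p ^ s) dvd h \<longleftrightarrow> T \<subseteq> S"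
      using prime_pow_prod_dvd[of T s h] T unfolding S_def by auto
    then show "(-1::complex) ^ card T * (if (\<Prod>p\<in>T. p ^ s) dvd h then 1 else 0)
        = (if T \<subseteq> S then (-1::complex) ^ card T else 0)" by simp
  qed
  also have "\<dots> = (\<Sum>T\<in>{T\<in>Pow P. T \<subseteq> S}. (-1::complex) ^ card T)"
    using assms by (intro sum.inter_filter[symmetric]) simp
  also have "{T\<in>Pow P. T \<subseteq> S} = Pow S" unfolding S_def by auto
  also have "(\<Sum>T\<in>Pow S. (-1::complex) ^ card T) = (if S = {} then 1 else 0)"
    using assms unfolding S_def by (intro alt_sum) auto
  finally show ?thesis unfolding S_def by simp
qed

lemma prod_primes_dvd:
  fixes q :: nat
  assumes "q > 0" "T \<subseteq> prime_factors q"
  shows "(\<Prod>p\<in>T. p ^ s) dvd q ^ s"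
proof -
  have fT: "finite T" using assms finite_subset by blast
  have "(\<Prod>p\<in>T. p ^ 1) dvd q"
    using prime_pow_prod_dvd[of T 1 q] fT assms by auto
  then have "(\<Prod>p\<in>T. p) ^ s dvd q ^ s" by (simp add: dvd_power_same)
  then show ?thesis by (simp add: prod_power_distrib)
qed

lemma cr_formula:
  assumes "q > 0" "s > 0"
  shows "cohen_ramanujan s q n
      = (\<Sum>T\<in>Pow (prime_factors q). (-1) ^ card T * Phi n (q ^ s div (\<Prod>p\<in>T. p ^ s)))"
proof -
  define P where "P = prime_factors q"
  define N where "N = q ^ s"
  define E where "E h = exp (2 * of_real pi * \<i> * of_nat n * of_nat h / of_nat N)" for h
  have fP: "finite P" and pP: "\<forall>p\<in>P. prime p" unfolding P_def by auto
  have N0: "N > 0" using assms N_def by simp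
  have cond: "gen_gcd s h N = 1 \<longleftrightarrow> {p\<in>P. p ^ s dvd h} = {}" if "h \<in> {1..N}" for h
    using gen_gcd_eq_1[of s h q] that assms unfolding N_def P_def
    by (auto simp: in_prime_factors_iff)
  have "cohen_ramanujan s q n = (\<Sum>h\<in>{h\<in>{1..N}. gen_gcd s h N = 1}. E h)"
    unfolding cohen_ramanujan_def N_def E_def by simp
  also have "\<dots> = (\<Sum>h\<in>{1..N}. (if {p\<in>P. p ^ s dvd h} = {} then 1 else 0) * E h)"
  proof -
    have "(\<Sum>h\<in>{h\<in>{1..N}. gen_gcd s h N = 1}. E h) = (\<Sum>h\<in>{1..N}. if gen_gcd s h N = 1 then E h else 0)"
      by (rule sum.inter_filter) simp
    also have "\<dots> = (\<Sum>h\<in>{1..N}. (if {p\<in>P. p ^ s dvd h} = {} then 1 else 0) * E h)"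
    proof (rule sum.cong[OF refl])
      fix h assume "h \<in> {1..N}"
      from cond[OF this] show "(if gen_gcd s h N = 1 then E h else 0) = (if {p\<in>P. p ^ s dvd h} = {} then 1 else 0) * E h"
        by auto
    qed
    finally show ?thesis .
  qed
  also have "\<dots> = (\<Sum>h\<in>{1..N}. \<Sum>T\<in>Pow P. (-1) ^ card T * ((if (\<Prod>p\<in>T. p ^ s) dvd h then 1 else 0) * E h))"
  proof (rule sum.cong[OF refl])
    fix h
    show "(if {p\<in>P. p ^ s dvd h} = {} then 1 else 0) * E h = (\<Sum>T\<in>Pow P. (-1) ^ card T * ((if (\<Prod>p\<in>T. p ^ s) dvd h then 1 else 0) * E h))"
      unfolding indicator_sum[OF fP pP, of s h] sum_distrib_right by (simp add: mult.assoc)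
  qed
  also have "\<dots> = (\<Sum>T\<in>Pow P. (-1) ^ card T * (\<Sum>h\<in>{1..N}. (if (\<Prod>p\<in>T. p ^ s) dvd h then 1 else 0) * E h))"
    by (subst sum.swap) (simp add: sum_distrib_left)
  also have "\<dots> = (\<Sum>T\<in>Pow P. (-1) ^ card T * Phi n (N div (\<Prod>p\<in>T. p ^ s)))"
  proof (rule sum.cong[OF refl])
    fix T assume T: "T \<in> Pow P"
    have M0: "(\<Prod>p\<in>T. p ^ s) > 0" using T pP by (intro prod_pos) (auto intro: prime_gt_0_nat)
    have Md: "(\<Prod>p\<in>T. p ^ s) dvd N" using T prod_primes_dvd assms unfolding N_def P_def by auto
    have "(\<Sum>h\<in>{1..N}. (if (\<Prod>p\<in>T. p ^ s) dvd h then 1 else 0) * E h)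
        = (\<Sum>h\<in>{h\<in>{1..N}. (\<Prod>p\<in>T. p ^ s) dvd h}. E h)"
      by (subst sum.inter_filter) (auto intro!: sum.cong)
    also have "\<dots> = Phi n (N div (\<Prod>p\<in>T. p ^ s))"
      unfolding E_def by (rule inner_sum[OF M0 Md N0])
    finally show "(-1) ^ card T * (\<Sum>h\<in>{1..N}. (if (\<Prod>p\<in>T. p ^ s) dvd h then 1 else 0) * E h)
        = (-1) ^ card T * Phi n (N div (\<Prod>p\<in>T. p ^ s))" by simp
  qed
  finally show ?thesis unfolding N_def P_def .
qed

lemma Phi_mult:
  assumes "coprime L1 L2" "L1 > 0" "L2 > 0"
  shows "Phi n (L1 * L2) = Phi n L1 * Phi n L2"
proof -
  have "L1 * L2 dvd n \<longleftrightarrow> L1 dvd n \<and> L2 dvd n"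
    using assms by (auto intro: divides_mult dvd_mult_left dvd_mult_right)
  then show ?thesis using assms by (simp add: Phi_eq)
qed

lemma cr_mult:
  assumes "q1 > 0" "q2 > 0" "coprime q1 q2" "s > 0"
  shows "cohen_ramanujan s (q1 * q2) n = cohen_ramanujan s q1 n * cohen_ramanujan s q2 n"
proof -
  define P1 where "P1 = prime_factors q1"
  define P2 where "P2 = prime_factors q2"
  define f where "f q T = (-1) ^ card T * Phi n (q ^ s div (\<Prod>p\<in>T. p ^ s))" for q T
  have fin: "finite P1" "finite P2" unfolding P1_def P2_def by auto
  have disj: "P1 \<inter> P2 = {}"
  proof (rule ccontr)
    assume "P1 \<inter> P2 \<noteq> {}"
    then obtain p where "p \<in> P1" "p \<in> P2" by auto
    then have "prime p" "p dvd q1" "p dvd q2" unfolding P1_def P2_def by (auto simp: in_prime_factors_iff)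
    then have "p = 1" using assms(3) coprime_common_divisor_nat by blast
    then show False using \<open>prime p\<close> by simp
  qed
  have P: "prime_factors (q1 * q2) = P1 \<union> P2"
    unfolding P1_def P2_def using assms by (simp add: prime_factors_product)
  have key: "f (q1 * q2) (T1 \<union> T2) = f q1 T1 * f q2 T2" if T: "T1 \<subseteq> P1" "T2 \<subseteq> P2" for T1 T2
  proof -
    have fT: "finite T1" "finite T2" using T fin finite_subset by auto
    have dj: "T1 \<inter> T2 = {}" using T disj by auto
    have card: "card (T1 \<union> T2) = card T1 + card T2" using fT dj card_Un_disjoint by blast
    have prod: "(\<Prod>p\<in>T1 \<union> T2. p ^ s) = (\<Prod>p\<in>T1. p ^ s) * (\<Prod>p\<in>T2. p ^ s)"
      using fT dj prod.union_disjoint by blast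
    have d1: "(\<Prod>p\<in>T1. p ^ s) dvd q1 ^ s" using prod_primes_dvd assms T unfolding P1_def by auto
    have d2: "(\<Prod>p\<in>T2. p ^ s) dvd q2 ^ s" using prod_primes_dvd assms T unfolding P2_def by auto
    have div: "(q1 * q2) ^ s div ((\<Prod>p\<in>T1. p ^ s) * (\<Prod>p\<in>T2. p ^ s))
        = (q1 ^ s div (\<Prod>p\<in>T1. p ^ s)) * (q2 ^ s div (\<Prod>p\<in>T2. p ^ s))"
      using div_mult_div_if_dvd[OF d1 d2] by (simp add: power_mult_distrib)
    have "q1 ^ s div (\<Prod>p\<in>T1. p ^ s) \<noteq> 0" using dvd_div_eq_0_iff[OF d1] assms by simp
    then have pos1: "q1 ^ s div (\<Prod>p\<in>T1. p ^ s) > 0" by simp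
    have "q2 ^ s div (\<Prod>p\<in>T2. p ^ s) \<noteq> 0" using dvd_div_eq_0_iff[OF d2] assms by simp
    then have pos2: "q2 ^ s div (\<Prod>p\<in>T2. p ^ s) > 0" by simp
    have e1: "q1 ^ s div (\<Prod>p\<in>T1. p ^ s) dvd q1 ^ s" using d1 by (metis dvd_mult_div_cancel dvd_triv_right)
    have e2: "q2 ^ s div (\<Prod>p\<in>T2. p ^ s) dvd q2 ^ s" using d2 by (metis dvd_mult_div_cancel dvd_triv_right)
    have "coprime (q1 ^ s) (q2 ^ s)" using assms(3) by simp
    then have cop: "coprime (q1 ^ s div (\<Prod>p\<in>T1. p ^ s)) (q2 ^ s div (\<Prod>p\<in>T2. p ^ s))"
      using e1 e2 coprime_divisors by blast
    show ?thesis unfolding f_def card prod div Phi_mult[OF cop pos1 pos2]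
      by (simp add: power_add)
  qed
  have inj: "inj_on (\<lambda>(A, B). A \<union> B) (Pow P1 \<times> Pow P2)"
  proof (rule inj_onI)
    fix x y assume x: "x \<in> Pow P1 \<times> Pow P2" and y: "y \<in> Pow P1 \<times> Pow P2"
      and e: "(\<lambda>(A, B). A \<union> B) x = (\<lambda>(A, B). A \<union> B) y"
    obtain A B where xAB: "x = (A, B)" by fastforce
    obtain C D where yCD: "y = (C, D)" by fastforce
    have H: "A \<subseteq> P1" "B \<subseteq> P2" "C \<subseteq> P1" "D \<subseteq> P2" "A \<union> B = C \<union> D"
      using x y e xAB yCD by auto
    have "A = (A \<union> B) \<inter> P1" "C = (C \<union> D) \<inter> P1" "B = (A \<union> B) \<inter> P2" "D = (C \<union> D) \<inter> P2"
      using H disj by blast+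
    then have "A = C" "B = D" using H(5) by metis+
    then show "x = y" using xAB yCD by simp
  qed
  have img: "(\<lambda>(A, B). A \<union> B) ` (Pow P1 \<times> Pow P2) = Pow (P1 \<union> P2)"
  proof (safe)
    fix T assume "T \<subseteq> P1 \<union> P2"
    then have "T = (T \<inter> P1) \<union> (T \<inter> P2)" "(T \<inter> P1, T \<inter> P2) \<in> Pow P1 \<times> Pow P2" by auto
    then show "T \<in> (\<lambda>(A, B). A \<union> B) ` (Pow P1 \<times> Pow P2)" by (metis (no_types, lifting) case_prod_conv image_eqI)
  qed auto
  have "cohen_ramanujan s (q1 * q2) n = (\<Sum>T\<in>Pow (P1 \<union> P2). f (q1 * q2) T)"
    using cr_formula[of "q1 * q2" s n] assms P unfolding f_def by simp
  also have "\<dots> = (\<Sum>x\<in>Pow P1 \<times> Pow P2. f (q1 * q2) ((\<lambda>(A, B). A \<union> B) x))"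
    by (subst img[symmetric], subst sum.reindex[OF inj]) simp
  also have "\<dots> = (\<Sum>x\<in>Pow P1 \<times> Pow P2. f q1 (fst x) * f q2 (snd x))"
    by (rule sum.cong[OF refl]) (auto simp: key)
  also have "\<dots> = (\<Sum>T1\<in>Pow P1. f q1 T1) * (\<Sum>T2\<in>Pow P2. f q2 T2)"
    by (simp add: sum_product sum.cartesian_product case_prod_beta)
  also have "\<dots> = cohen_ramanujan s q1 n * cohen_ramanujan s q2 n"
    using cr_formula[of q1 s n] cr_formula[of q2 s n] assms unfolding f_def P1_def P2_def by simp
  finally show ?thesis .
qed

lemma prime_factors_prime_pow:
  fixes p :: nat
  assumes "prime p" "j > 0"
  shows "prime_factors (p ^ j) = {p}"
proof -
  have "q \<in> prime_factors (p ^ j) \<longleftrightarrow> q = p" for q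
  proof
    assume "q \<in> prime_factors (p ^ j)"
    then have "prime q" "q dvd p ^ j" using assms by (auto simp: in_prime_factors_iff)
    then have "q dvd p" using assms prime_dvd_power_iff by blast
    then show "q = p" using \<open>prime q\<close> assms primes_dvd_imp_eq by blast
  next
    assume "q = p"
    then show "q \<in> prime_factors (p ^ j)" using assms by (auto simp: in_prime_factors_iff)
  qed
  then show ?thesis by auto
qed

lemma cr_one: "s > 0 \<Longrightarrow> cohen_ramanujan s 1 n = 1"
  using cr_formula[of 1 s n] by (simp add: Phi_eq)

lemma cr_prime_pow:
  fixes p :: nat
  assumes "prime p" "j > 0" "s > 0"
  shows "cohen_ramanujan s (p ^ j) n = Phi n (p ^ (j * s)) - Phi n (p ^ ((j - 1) * s))"
proof -
  have p0: "p > 0" using assms prime_gt_0_nat by blast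
  have "cohen_ramanujan s (p ^ j) n
      = (\<Sum>T\<in>Pow {p}. (-1) ^ card T * Phi n ((p ^ j) ^ s div (\<Prod>p\<in>T. p ^ s)))"
    using cr_formula[of "p ^ j" s n] assms p0 prime_factors_prime_pow by simp
  also have "Pow {p} = {{}, {p}}" by auto
  moreover have "(p ^ j) ^ s div p ^ s = p ^ ((j - 1) * s)"
  proof -
    have "(p ^ j) ^ s = p ^ s * p ^ ((j - 1) * s)"
      using assms by (cases j) (auto simp: power_mult[symmetric] power_add[symmetric] algebra_simps)
    then show ?thesis using p0 by simp
  qed
  ultimately show ?thesis by (simp add: power_mult[symmetric] mult.commute)
qed

lemma norm_diff_nat: "norm (of_nat a - of_nat b :: complex) = \<bar>real a - real b\<bar>"
  by (metis norm_of_real of_real_diff of_real_of_nat_eq)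

lemma prime_pow_sum:
  fixes p :: nat
  assumes "prime p" "s > 0" "n > 0"
  shows "\<exists>t\<le>a. p ^ (t * s) dvd n \<and> (\<Sum>i\<le>a. norm (cohen_ramanujan s (p ^ i) n)) \<le> 2 * p ^ (t * s)
          \<and> (p ^ (a * s) dvd n \<longrightarrow> (\<Sum>i\<le>a. norm (cohen_ramanujan s (p ^ i) n)) = p ^ (a * s))"
proof (induction a)
  case 0
  have "cohen_ramanujan s 1 n = 1" using assms cr_one by blast
  then show ?case by simp
next
  case (Suc a)
  define R where "R = (\<Sum>i\<le>a. norm (cohen_ramanujan s (p ^ i) n))"
  from Suc obtain t where t: "t \<le> a" "p ^ (t * s) dvd n" "R \<le> 2 * p ^ (t * s)"
    "p ^ (a * s) dvd n \<longrightarrow> R = p ^ (a * s)" unfolding R_def by blast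
  have p0: "p > 0" using assms prime_gt_0_nat by blast
  have RS: "(\<Sum>i\<le>Suc a. norm (cohen_ramanujan s (p ^ i) n)) = R + norm (cohen_ramanujan s (p ^ Suc a) n)"
    unfolding R_def by simp
  have c: "cohen_ramanujan s (p ^ Suc a) n = Phi n (p ^ (Suc a * s)) - Phi n (p ^ (a * s))"
    using cr_prime_pow[of p "Suc a" s n] assms by simp
  have mono: "p ^ (a * s) dvd p ^ (Suc a * s)" by (simp add: le_imp_power_dvd)
  show ?case
  proof (cases "p ^ (Suc a * s) dvd n")
    case True
    then have T2: "p ^ (a * s) dvd n" using mono dvd_trans by blast
    have le: "p ^ (a * s) \<le> p ^ (Suc a * s)" using p0 mono by (simp add: dvd_imp_le)
    have "cohen_ramanujan s (p ^ Suc a) n = of_nat (p ^ (Suc a * s)) - of_nat (p ^ (a * s))"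
      unfolding c using True T2 p0 by (simp add: Phi_eq del: of_nat_power)
    then have "norm (cohen_ramanujan s (p ^ Suc a) n) = \<bar>real (p ^ (Suc a * s)) - real (p ^ (a * s))\<bar>"
      using norm_diff_nat by presburger
    also have "\<dots> = real (p ^ (Suc a * s)) - real (p ^ (a * s))"
      using le by (simp del: of_nat_power)
    finally have "norm (cohen_ramanujan s (p ^ Suc a) n) = real (p ^ (Suc a * s)) - real (p ^ (a * s))" .
    then have "(\<Sum>i\<le>Suc a. norm (cohen_ramanujan s (p ^ i) n)) = p ^ (Suc a * s)"
      using RS t T2 by simp
    then show ?thesis using True
      by (intro exI[of _ "Suc a"]) auto
  next
    case False
    note F = False
    show ?thesis
    proof (cases "p ^ (a * s) dvd n")
      case True
      have "cohen_ramanujan s (p ^ Suc a) n = of_nat 0 - of_nat (p ^ (a * s))"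
        unfolding c using True F p0 by (simp add: Phi_eq del: of_nat_power)
      then have "norm (cohen_ramanujan s (p ^ Suc a) n) = \<bar>real 0 - real (p ^ (a * s))\<bar>"
        using norm_diff_nat by presburger
      then have "norm (cohen_ramanujan s (p ^ Suc a) n) = real (p ^ (a * s))" by simp
      then have "(\<Sum>i\<le>Suc a. norm (cohen_ramanujan s (p ^ i) n)) = 2 * p ^ (a * s)"
        using RS t True by simp
      then show ?thesis using True F
        by (intro exI[of _ a]) auto
    next
      case False
      have "norm (cohen_ramanujan s (p ^ Suc a) n) = 0"
        unfolding c using False F p0 by (simp add: Phi_eq)
      then show ?thesis using RS t F
        by (intro exI[of _ t]) auto
    qed
  qed
qed

lemma divisor_sum_split:
  fixes A B :: nat and f :: "nat \<Rightarrow> real"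
  assumes "coprime A B" "A > 0" "B > 0"
  shows "(\<Sum>q | q dvd A * B. f q) = (\<Sum>x | x dvd A. \<Sum>y | y dvd B. f (x * y))"
proof -
  have inj: "inj_on (\<lambda>(x, y). x * y) ({x. x dvd A} \<times> {y. y dvd B})"
  proof (rule inj_onI)
    fix u v assume u: "u \<in> {x. x dvd A} \<times> {y. y dvd B}" and v: "v \<in> {x. x dvd A} \<times> {y. y dvd B}"
      and e: "(\<lambda>(x, y). x * y) u = (\<lambda>(x, y). x * y) v"
    obtain x1 y1 where u1: "u = (x1, y1)" by fastforce
    obtain x2 y2 where v2: "v = (x2, y2)" by fastforce
    have H: "x1 dvd A" "y1 dvd B" "x2 dvd A" "y2 dvd B" "x1 * y1 = x2 * y2"
      using u v e u1 v2 by auto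
    have g: "gcd (x * y) A = x" if "x dvd A" "y dvd B" for x y
    proof -
      have "coprime A y" using assms(1) that coprime_divisors dvd_refl by blast
      then have "gcd (x * y) A = gcd x A" by (rule gcd_mult_left_right_cancel)
      then show ?thesis using that by (simp add: gcd_nat.absorb1)
    qed
    have g2: "gcd (x * y) B = y" if "x dvd A" "y dvd B" for x y
    proof -
      have "coprime B x" using assms(1) that coprime_divisors dvd_refl coprime_commute by metis
      then have "gcd (x * y) B = gcd y B" using gcd_mult_left_left_cancel by blast
      then show ?thesis using that by (simp add: gcd_nat.absorb1)
    qed
    have "x1 = x2" using g[of x1 y1] g[of x2 y2] H by metis
    moreover have "y1 = y2" using g2[of x1 y1] g2[of x2 y2] H by metis
    ultimately show "u = v" using u1 v2 by simp
  qed
  have img: "(\<lambda>(x, y). x * y) ` ({x. x dvd A} \<times> {y. y dvd B}) = {q. q dvd A * B}"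
  proof safe
    fix q assume "q dvd A * B"
    then obtain x y where "q = x * y" "x dvd A" "y dvd B" using division_decomp by blast
    then show "q \<in> (\<lambda>(x, y). x * y) ` ({x. x dvd A} \<times> {y. y dvd B})" by force
  qed (auto intro: mult_dvd_mono)
  have "(\<Sum>q | q dvd A * B. f q) = (\<Sum>u\<in>{x. x dvd A} \<times> {y. y dvd B}. f ((\<lambda>(x, y). x * y) u))"
    by (subst img[symmetric], subst sum.reindex[OF inj]) simp
  also have "\<dots> = (\<Sum>x | x dvd A. \<Sum>y | y dvd B. f (x * y))"
    by (simp add: sum.cartesian_product case_prod_beta)
  finally show ?thesis .
qed

definition S :: "nat \<Rightarrow> nat \<Rightarrow> nat \<Rightarrow> real" where
  "S s n k = (\<Sum>q | q dvd k. norm (cohen_ramanujan s q n))"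

lemma S_mult:
  assumes "coprime A B" "A > 0" "B > 0" "s > 0"
  shows "S s n (A * B) = S s n A * S s n B"
proof -
  have "S s n (A * B) = (\<Sum>x | x dvd A. \<Sum>y | y dvd B. norm (cohen_ramanujan s (x * y) n))"
    unfolding S_def using divisor_sum_split assms by blast
  also have "\<dots> = (\<Sum>x | x dvd A. \<Sum>y | y dvd B. norm (cohen_ramanujan s x n) * norm (cohen_ramanujan s y n))"
  proof (intro sum.cong refl)
    fix x y assume "x \<in> {x. x dvd A}" "y \<in> {y. y dvd B}"
    then have "x dvd A" "y dvd B" by auto
    then have "coprime x y" "x > 0" "y > 0" using assms coprime_divisors by (auto intro: dvd_pos_nat)
    then show "norm (cohen_ramanujan s (x * y) n) = norm (cohen_ramanujan s x n) * norm (cohen_ramanujan s y n)"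
      using cr_mult assms by (simp add: norm_mult)
  qed
  also have "\<dots> = S s n A * S s n B"
    unfolding S_def by (simp add: sum_product)
  finally show ?thesis .
qed

lemma S_prime_pow:
  fixes p :: nat
  assumes "prime p"
  shows "S s n (p ^ a) = (\<Sum>i\<le>a. norm (cohen_ramanujan s (p ^ i) n))"
proof -
  have p1: "p > 1" using assms prime_gt_1_nat by blast
  have set: "{q. q dvd p ^ a} = (\<lambda>i. p ^ i) ` {..a}"
    using divides_primepow_nat[OF assms] by auto
  have inj: "inj_on (\<lambda>i. p ^ i) {..a}"
    using p1 by (auto simp: inj_on_def)
  show ?thesis unfolding S_def set by (subst sum.reindex[OF inj]) simp
qed

lemma main_claim:
  assumes "k > 0" "n > 0" "s > 0"
  shows "\<exists>d. d dvd k \<and> d ^ s dvd n \<and> S s n k \<le> 2 ^ omega k * d ^ s"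
  using assms(1)
proof (induction k rule: less_induct)
  case (less k)
  show ?case
  proof (cases "k = 1")
    case True
    have "S s n 1 = 1" unfolding S_def using cr_one[OF assms(3)] by simp
    moreover have "omega 1 = 0" unfolding omega_def by simp
    ultimately show ?thesis using True by (intro exI[of _ 1]) simp
  next
    case False
    then obtain p where p: "prime p" "p dvd k" using prime_factor_nat by blast
    define a where "a = multiplicity p k"
    define k' where "k' = k div p ^ a"
    have kk: "k = p ^ a * k'" unfolding a_def k'_def by (simp add: multiplicity_dvd)
    have nd: "\<not> p dvd k'" unfolding a_def k'_def using multiplicity_decompose[of k p] less.prems p not_prime_unit by blast
    have a0: "a > 0" unfolding a_def using multiplicity_gt_zero_iff[of k p] p less.prems not_prime_unit by blast
    have k'0: "k' > 0" using kk less.prems by (cases k') auto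
    have pa1: "p ^ a > 1" using a0 p prime_gt_1_nat one_less_power by blast
    have lt: "k' < k" using kk k'0 pa1 by simp
    have cop: "coprime (p ^ a) k'"
      using nd p by (simp add: coprime_power_left_iff prime_imp_coprime)
    from less.IH[OF lt k'0] obtain d' where d': "d' dvd k'" "d' ^ s dvd n" "S s n k' \<le> 2 ^ omega k' * d' ^ s"
      by blast
    from prime_pow_sum[OF p(1) assms(3) assms(2), of a] obtain t where
      t: "t \<le> a" "p ^ (t * s) dvd n" "(\<Sum>i\<le>a. norm (cohen_ramanujan s (p ^ i) n)) \<le> 2 * p ^ (t * s)"
      by blast
    have Spa: "S s n (p ^ a) \<le> 2 * p ^ (t * s)" using t S_prime_pow[OF p(1)] by simp
    have Sk: "S s n k = S s n (p ^ a) * S s n k'"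
      unfolding kk using S_mult[OF cop _ k'0 assms(3)] p prime_gt_0_nat by simp
    have om: "omega k = Suc (omega k')"
    proof -
      have "prime_factors k = insert p (prime_factors k')"
        unfolding kk using prime_factors_product[of "p ^ a" k'] k'0 p a0 prime_factors_prime_pow
        by (simp add: prime_gt_0_nat)
      moreover have "p \<notin> prime_factors k'" using nd by (auto simp: in_prime_factors_iff)
      ultimately show ?thesis unfolding omega_def by simp
    qed
    define d where "d = p ^ t * d'"
    have "d dvd k" unfolding d_def kk using t d' by (intro mult_dvd_mono) (auto simp: le_imp_power_dvd)
    moreover have "d ^ s dvd n"
    proof -
      have "coprime p d'" using nd d' p by (meson coprime_commute dvd_trans prime_imp_coprime)
      then have "coprime (p ^ (t * s)) (d' ^ s)" by simp
      then have "p ^ (t * s) * d' ^ s dvd n" using t d' by (intro divides_mult)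
      moreover have "(p ^ t * d') ^ s = p ^ (t * s) * d' ^ s"
        by (simp add: power_mult_distrib power_mult)
      ultimately show ?thesis unfolding d_def by simp
    qed
    moreover have "S s n k \<le> 2 ^ omega k * d ^ s"
    proof -
      have nn: "S s n k' \<ge> 0" "S s n (p ^ a) \<ge> 0" unfolding S_def by (auto intro: sum_nonneg)
      have le1: "S s n k \<le> real (2 * p ^ (t * s)) * real (2 ^ omega k' * d' ^ s)"
        unfolding Sk using Spa d'(3) nn by (intro mult_mono) auto
      have "(p ^ s) ^ t = (p ^ t) ^ s" by (simp add: power_mult[symmetric] mult.commute)
      then have "(2 * p ^ (t * s)) * (2 ^ omega k' * d' ^ s) = 2 ^ omega k * d ^ s"
        unfolding om d_def by (simp add: power_mult_distrib power_mult mult.commute mult.left_commute)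
      then have "real (2 * p ^ (t * s)) * real (2 ^ omega k' * d' ^ s) = real (2 ^ omega k * d ^ s)"
        by (metis of_nat_mult)
      then show ?thesis using le1 by simp
    qed
    ultimately show ?thesis by blast
  qed
qed

theorem theorem1:
  fixes k n s :: nat
  assumes "k > 0" and "n > 0" and "s > 0"
  shows "(\<Sum>q | q dvd k. norm (cohen_ramanujan s q n)) \<le> real n * 2 ^ omega k"
proof -
  obtain d where d: "d dvd k" "d ^ s dvd n" "S s n k \<le> 2 ^ omega k * d ^ s"
    using main_claim[OF assms] by blast
  have "d ^ s \<le> n" using d(2) assms(2) by (simp add: dvd_imp_le)
  then have "real (d ^ s) \<le> real n" by linarith
  then have "2 ^ omega k * real (d ^ s) \<le> 2 ^ omega k * real n" by simp
  moreover have "real (2 ^ omega k * d ^ s) = 2 ^ omega k * real (d ^ s)" by simp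
  ultimately have "S s n k \<le> 2 ^ omega k * real n" using d(3) by linarith
  then show ?thesis unfolding S_def by (simp add: mult.commute)
qed

end
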